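(* Let $F$ be a field of characteristic different from $2$, let $Q_1,Q_2,Q_3,Q_4$ be quaternion $F$-algebras with canonical involutions $\gamma_i$, and let $(D,\gamma)=(Q_1,\gamma_1)\otimes(Q_2,\gamma_2)$. Let $u\in D$ be invertible with $\gamma(u)=u$ and $\mathrm{Trd}_D(u)=0$, and suppose there is an isomorphism of algebras with involution $(Q_3,\gamma_3)\otimes(Q_4,\gamma_4)\simeq(D,\mathrm{Int}(u^{-1})\circ\gamma)$. Then the $16$-dimensional quadratic space $(D,q_u)$, where $q_u(x)=\mathrm{Trd}_D(xu\gamma(x))$, contains a totally isotropic subspace of dimension $5$.
   Context: The canonical involution of a quaternion algebra $Q$ is $\gamma_Q(x)=\mathrm{Trd}_Q(x)-x$. $\mathrm{Trd}_D$ is the reduced trace of $D$; $\mathrm{Int}(a)(x)=axa^{-1}$. *)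

theory Defs
  imports "HOL-Analysis.Analysis"
begin

text \<open>Basis labels of a quaternion algebra (a,b)_F: 1, i, j, k = ij.\<close>
datatype qb = Q0 | QI | QJ | QK

lemma UNIV_qb: "(UNIV :: qb set) = {Q0, QI, QJ, QK}"
  by (auto intro: qb.exhaust)

instance qb :: finite
  by standard (simp add: UNIV_qb)

text \<open>Multiplication table of (a,b)_F: i^2 = a, j^2 = b, k = ij = -ji.
  qprod a b s t = (c, r) means e_s * e_t = c * e_r.\<close>
fun qprod :: "'a::field \<Rightarrow> 'a \<Rightarrow> qb \<Rightarrow> qb \<Rightarrow> 'a \<times> qb" where
  "qprod a b Q0 t = (1, t)"
| "qprod a b QI Q0 = (1, QI)"
| "qprod a b QI QI = (a, Q0)"
| "qprod a b QI QJ = (1, QK)"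
| "qprod a b QI QK = (a, QJ)"
| "qprod a b QJ Q0 = (1, QJ)"
| "qprod a b QJ QI = (-1, QK)"
| "qprod a b QJ QJ = (b, Q0)"
| "qprod a b QJ QK = (-b, QI)"
| "qprod a b QK Q0 = (1, QK)"
| "qprod a b QK QI = (-a, QJ)"
| "qprod a b QK QJ = (b, QI)"
| "qprod a b QK QK = (-(a*b), Q0)"

text \<open>Structure constant: coefficient of e_r in e_s * e_t.\<close>
definition qsc :: "'a::field \<Rightarrow> 'a \<Rightarrow> qb \<Rightarrow> qb \<Rightarrow> qb \<Rightarrow> 'a" where
  "qsc a b s t r = (if snd (qprod a b s t) = r then fst (qprod a b s t) else 0)"

text \<open>Elements of the biquaternion algebra (a,b)_F \<otimes> (c,d)_F are vectors in F^16,
  coordinates indexed by pairs of basis labels (e_s \<otimes> e_t).\<close>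
type_synonym 'a biquat = "'a ^ (qb \<times> qb)"

definition bq_mult :: "'a::field \<Rightarrow> 'a \<Rightarrow> 'a \<Rightarrow> 'a \<Rightarrow> 'a biquat \<Rightarrow> 'a biquat \<Rightarrow> 'a biquat" where
  "bq_mult a b c d x y = (\<chi> r. \<Sum>s\<in>UNIV. \<Sum>t\<in>UNIV.
      x $ s * y $ t * qsc a b (fst s) (fst t) (fst r) * qsc c d (snd s) (snd t) (snd r))"

definition bq_one :: "'a::field biquat" where
  "bq_one = (\<chi> r. if r = (Q0, Q0) then 1 else 0)"

text \<open>Canonical involution sign: gamma_Q(e_0) = e_0, gamma_Q(e_s) = - e_s otherwise.\<close>
definition qeps :: "qb \<Rightarrow> 'a::field" where
  "qeps s = (if s = Q0 then 1 else -1)"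

text \<open>gamma_1 \<otimes> gamma_2 (tensor product of canonical involutions).\<close>
definition bq_inv :: "'a::field biquat \<Rightarrow> 'a biquat" where
  "bq_inv x = (\<chi> p. qeps (fst p) * qeps (snd p) * x $ p)"

text \<open>Reduced trace of the degree-4 algebra: Trd(x \<otimes> y) = Trd(x) Trd(y), Trd_Q(e_0)=2.\<close>
definition bq_trd :: "'a::field biquat \<Rightarrow> 'a" where
  "bq_trd x = 4 * x $ (Q0, Q0)"

definition bq_invertible :: "'a::field \<Rightarrow> 'a \<Rightarrow> 'a \<Rightarrow> 'a \<Rightarrow> 'a biquat \<Rightarrow> bool" where
  "bq_invertible a b c d u \<longleftrightarrow> (\<exists>v. bq_mult a b c d u v = bq_one \<and> bq_mult a b c d v u = bq_one)"

definition bq_inverse :: "'a::field \<Rightarrow> 'a \<Rightarrow> 'a \<Rightarrow> 'a \<Rightarrow> 'a biquat \<Rightarrow> 'a biquat" where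
  "bq_inverse a b c d u = (THE v. bq_mult a b c d u v = bq_one \<and> bq_mult a b c d v u = bq_one)"

text \<open>The quadratic form q_u(x) = Trd_D(x u gamma(x)).\<close>
definition bq_qform :: "'a::field \<Rightarrow> 'a \<Rightarrow> 'a \<Rightarrow> 'a \<Rightarrow> 'a biquat \<Rightarrow> 'a biquat \<Rightarrow> 'a" where
  "bq_qform a b c d u x = bq_trd (bq_mult a b c d (bq_mult a b c d x u) (bq_inv x))"

text \<open>phi is an isomorphism of F-algebras with involution
  ((e,f)\<otimes>(g,h), gamma_3 \<otimes> gamma_4) \<cong> ((a,b)\<otimes>(c,d), tau).\<close>
definition bq_iso_inv ::
  "'a::field \<Rightarrow> 'a \<Rightarrow> 'a \<Rightarrow> 'a \<Rightarrow> 'a \<Rightarrow> 'a \<Rightarrow> 'a \<Rightarrow> 'a \<Rightarrow>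
   ('a biquat \<Rightarrow> 'a biquat) \<Rightarrow> ('a biquat \<Rightarrow> 'a biquat) \<Rightarrow> bool" where
  "bq_iso_inv e f g h a b c d tau phi \<longleftrightarrow>
     Vector_Spaces.linear (*s) (*s) phi \<and> bij phi \<and>
     phi bq_one = bq_one \<and>
     (\<forall>x y. phi (bq_mult e f g h x y) = bq_mult a b c d (phi x) (phi y)) \<and>
     (\<forall>x. phi (bq_inv x) = tau (phi x))"

end

theory Submission
  imports Defs
begin


lemma sum_UNIV_qb: "(\<Sum>x\<in>UNIV. f x) = f Q0 + f QI + f QJ + f QK"
  by (simp add: UNIV_qb add.assoc)

lemma sum_UNIV_pair: "(\<Sum>x\<in>(UNIV::(qb\<times>qb) set). f x) = (\<Sum>x1\<in>UNIV. \<Sum>x2\<in>UNIV. f (x1,x2))"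
  by (simp add: sum.cartesian_product)

lemma qa_assoc: "(\<Sum>m\<in>UNIV. qsc a b s t m * qsc a b m w r) = (\<Sum>m\<in>UNIV. qsc a b t w m * qsc a b s m r)"
  by (cases s; cases t; cases w; cases r; simp add: qsc_def sum_UNIV_qb)

lemma qa_inv: "qeps r * qsc a b s t r = qeps s * qeps t * qsc a b t s r"
  by (cases s; cases t; cases r; simp add: qsc_def qeps_def)

lemma qa_one_left: "qsc a b Q0 t r = (if t = r then 1 else 0)"
  by (simp add: qsc_def)
lemma qa_one_right: "qsc a b s Q0 r = (if s = r then 1 else 0)"
  by (cases s; simp add: qsc_def)

fun qkap :: "'a::field \<Rightarrow> 'a \<Rightarrow> qb \<Rightarrow> 'a" where
  "qkap a b Q0 = 1" | "qkap a b QI = a" | "qkap a b QJ = b" | "qkap a b QK = -(a*b)"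

lemma qa_trace: "qsc a b s t Q0 = (if s = t then qkap a b s else 0)"
  by (cases s; cases t; simp add: qsc_def)



definition K :: "'a::field \<Rightarrow> 'a \<Rightarrow> 'a \<Rightarrow> 'a \<Rightarrow> qb\<times>qb \<Rightarrow> qb\<times>qb \<Rightarrow> qb\<times>qb \<Rightarrow> 'a" where
  "K a b c d s t r = qsc a b (fst s) (fst t) (fst r) * qsc c d (snd s) (snd t) (snd r)"

lemma bq_nth: "bq_mult a b c d x y $ r = (\<Sum>s\<in>UNIV. \<Sum>t\<in>UNIV. x$s * y$t * K a b c d s t r)"
  by (simp add: bq_mult_def K_def mult.assoc)

lemma K_assoc: "(\<Sum>m\<in>UNIV. K a b c d s t m * K a b c d m w r) = (\<Sum>m\<in>UNIV. K a b c d t w m * K a b c d s m r)"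
proof -
  have "(\<Sum>m\<in>UNIV. K a b c d s t m * K a b c d m w r) =
     (\<Sum>m1\<in>UNIV. qsc a b (fst s) (fst t) m1 * qsc a b m1 (fst w) (fst r)) *
     (\<Sum>m2\<in>UNIV. qsc c d (snd s) (snd t) m2 * qsc c d m2 (snd w) (snd r))"
    unfolding K_def sum_UNIV_pair sum_product by (simp add: mult_ac)
  also have "\<dots> = (\<Sum>m1\<in>UNIV. qsc a b (fst t) (fst w) m1 * qsc a b (fst s) m1 (fst r)) *
     (\<Sum>m2\<in>UNIV. qsc c d (snd t) (snd w) m2 * qsc c d (snd s) m2 (snd r))"
    by (simp add: qa_assoc)
  also have "\<dots> = (\<Sum>m\<in>UNIV. K a b c d t w m * K a b c d s m r)"
    unfolding K_def sum_UNIV_pair sum_product by (simp add: mult_ac)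
  finally show ?thesis .
qed

lemma swap3: "(\<Sum>m\<in>A. \<Sum>s\<in>C. \<Sum>t\<in>D. F m s t) = (\<Sum>s\<in>C. \<Sum>t\<in>D. \<Sum>m\<in>A. F m s t)"
proof -
  have "(\<Sum>m\<in>A. \<Sum>s\<in>C. \<Sum>t\<in>D. F m s t) = (\<Sum>s\<in>C. \<Sum>m\<in>A. \<Sum>t\<in>D. F m s t)"
    by (rule sum.swap)
  also have "\<dots> = (\<Sum>s\<in>C. \<Sum>t\<in>D. \<Sum>m\<in>A. F m s t)"
    by (intro sum.cong refl sum.swap)
  finally show ?thesis .
qed

lemma swap4: "(\<Sum>m\<in>A. \<Sum>w\<in>B. \<Sum>s\<in>C. \<Sum>t\<in>D. F m w s t) = (\<Sum>s\<in>C. \<Sum>t\<in>D. \<Sum>w\<in>B. \<Sum>m\<in>A. F m w s t)"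
proof -
  have "(\<Sum>m\<in>A. \<Sum>w\<in>B. \<Sum>s\<in>C. \<Sum>t\<in>D. F m w s t) = (\<Sum>m\<in>A. \<Sum>s\<in>C. \<Sum>t\<in>D. \<Sum>w\<in>B. F m w s t)"
    by (rule sum.cong[OF refl], rule swap3)
  also have "\<dots> = (\<Sum>s\<in>C. \<Sum>t\<in>D. \<Sum>m\<in>A. \<Sum>w\<in>B. F m w s t)" by (rule swap3)
  also have "\<dots> = (\<Sum>s\<in>C. \<Sum>t\<in>D. \<Sum>w\<in>B. \<Sum>m\<in>A. F m w s t)"
    by (intro sum.cong refl sum.swap)
  finally show ?thesis .
qed

lemma bq_assoc: "bq_mult a b c d (bq_mult a b c d x y) z = bq_mult a b c d x (bq_mult a b c d y z)"
proof (rule vec_eq_iff[THEN iffD2], rule allI)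
  fix r
  let ?K = "K a b c d"
  have "bq_mult a b c d (bq_mult a b c d x y) z $ r =
     (\<Sum>m\<in>UNIV. \<Sum>w\<in>UNIV. \<Sum>s\<in>UNIV. \<Sum>t\<in>UNIV. (x$s*y$t*z$w) * (?K s t m * ?K m w r))"
    unfolding bq_nth sum_distrib_right sum_distrib_left by (simp add: mult_ac)
  also have "\<dots> = (\<Sum>s\<in>UNIV. \<Sum>t\<in>UNIV. \<Sum>w\<in>UNIV. \<Sum>m\<in>UNIV. (x$s*y$t*z$w) * (?K s t m * ?K m w r))"
    by (rule swap4)
  also have "\<dots> = (\<Sum>s\<in>UNIV. \<Sum>t\<in>UNIV. \<Sum>w\<in>UNIV. (x$s*y$t*z$w) * (\<Sum>m\<in>UNIV. ?K s t m * ?K m w r))"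
    by (simp add: sum_distrib_left)
  also have "\<dots> = (\<Sum>s\<in>UNIV. \<Sum>t\<in>UNIV. \<Sum>w\<in>UNIV. (x$s*y$t*z$w) * (\<Sum>m\<in>UNIV. ?K t w m * ?K s m r))"
    by (simp add: K_assoc)
  also have "\<dots> = (\<Sum>s\<in>UNIV. \<Sum>t\<in>UNIV. \<Sum>w\<in>UNIV. \<Sum>m\<in>UNIV. (x$s*y$t*z$w) * (?K t w m * ?K s m r))"
    by (simp add: sum_distrib_left)
  also have "\<dots> = (\<Sum>s\<in>UNIV. \<Sum>m\<in>UNIV. \<Sum>t\<in>UNIV. \<Sum>w\<in>UNIV. (x$s*y$t*z$w) * (?K t w m * ?K s m r))"
    by (rule sum.cong[OF refl], rule swap3[symmetric])
  also have "\<dots> = bq_mult a b c d x (bq_mult a b c d y z) $ r"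
    unfolding bq_nth sum_distrib_right sum_distrib_left by (simp add: mult_ac)
  finally show "bq_mult a b c d (bq_mult a b c d x y) z $ r = bq_mult a b c d x (bq_mult a b c d y z) $ r" .
qed



definition epsP :: "qb\<times>qb \<Rightarrow> 'a::field" where "epsP p = qeps (fst p) * qeps (snd p)"

lemma K_inv: "epsP r * K a b c d s t r = epsP s * epsP t * K a b c d t s r"
proof -
  have "epsP r * K a b c d s t r = (qeps (fst r) * qsc a b (fst s) (fst t) (fst r)) * (qeps (snd r) * qsc c d (snd s) (snd t) (snd r))"
    by (simp add: epsP_def K_def mult_ac)
  also have "\<dots> = (qeps (fst s) * qeps (fst t) * qsc a b (fst t) (fst s) (fst r)) * (qeps (snd s) * qeps (snd t) * qsc c d (snd t) (snd s) (snd r))"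
    by (simp only: qa_inv)
  also have "\<dots> = epsP s * epsP t * K a b c d t s r"
    by (simp add: epsP_def K_def mult_ac)
  finally show ?thesis .
qed

lemma bq_inv_nth: "bq_inv x $ p = epsP p * x $ p"
  by (simp add: bq_inv_def epsP_def)

lemma bq_inv_mult: "bq_inv (bq_mult a b c d x y) = bq_mult a b c d (bq_inv y) (bq_inv x)"
proof (rule vec_eq_iff[THEN iffD2], rule allI)
  fix r
  have "bq_inv (bq_mult a b c d x y) $ r = (\<Sum>s\<in>UNIV. \<Sum>t\<in>UNIV. x$s * y$t * (epsP r * K a b c d s t r))"
    unfolding bq_inv_nth bq_nth sum_distrib_left by (simp add: mult_ac)
  also have "\<dots> = (\<Sum>s\<in>UNIV. \<Sum>t\<in>UNIV. x$s * y$t * (epsP s * epsP t * K a b c d t s r))"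
    by (simp only: K_inv)
  also have "\<dots> = (\<Sum>t\<in>UNIV. \<Sum>s\<in>UNIV. x$s * y$t * (epsP s * epsP t * K a b c d t s r))"
    by (rule sum.swap)
  also have "\<dots> = bq_mult a b c d (bq_inv y) (bq_inv x) $ r"
    unfolding bq_inv_nth bq_nth by (simp add: mult_ac)
  finally show "bq_inv (bq_mult a b c d x y) $ r = bq_mult a b c d (bq_inv y) (bq_inv x) $ r" .
qed

lemma epsP_sq: "epsP p * epsP p = (1::'a::field)"
  by (cases "fst p"; cases "snd p"; simp add: epsP_def qeps_def)

lemma bq_inv_inv[simp]: "bq_inv (bq_inv x) = (x::'a::field biquat)"
  by (simp add: vec_eq_iff bq_inv_nth mult.assoc[symmetric] epsP_sq)

lemma bq_inv_add: "bq_inv (x + y) = bq_inv x + bq_inv y"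
  by (simp add: vec_eq_iff bq_inv_nth algebra_simps)
lemma bq_inv_scale: "bq_inv (k *s x) = k *s bq_inv x"
  by (simp add: vec_eq_iff bq_inv_nth algebra_simps)
lemma bq_inv_neg: "bq_inv (- x) = - bq_inv x"
  by (simp add: vec_eq_iff bq_inv_nth algebra_simps)
lemma bq_inv_zero: "bq_inv 0 = 0"
  by (simp add: vec_eq_iff bq_inv_nth)

lemma bq_mult_add_left: "bq_mult a b c d (x + y) z = bq_mult a b c d x z + bq_mult a b c d y z"
  by (simp add: vec_eq_iff bq_nth algebra_simps sum.distrib)
lemma bq_mult_add_right: "bq_mult a b c d z (x + y) = bq_mult a b c d z x + bq_mult a b c d z y"
  by (simp add: vec_eq_iff bq_nth algebra_simps sum.distrib)
lemma bq_mult_scale_left: "bq_mult a b c d (k *s x) y = k *s bq_mult a b c d x y"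
  by (simp add: vec_eq_iff bq_nth sum_distrib_left mult_ac)
lemma bq_mult_scale_right: "bq_mult a b c d x (k *s y) = k *s bq_mult a b c d x y"
  by (simp add: vec_eq_iff bq_nth sum_distrib_left mult_ac)
lemma bq_mult_neg_left: "bq_mult a b c d (- x) y = - bq_mult a b c d x y"
  by (simp add: vec_eq_iff bq_nth sum_negf)
lemma bq_mult_neg_right: "bq_mult a b c d x (- y) = - bq_mult a b c d x y"
  by (simp add: vec_eq_iff bq_nth sum_negf)
lemma bq_mult_zero_left: "bq_mult a b c d 0 y = 0"
  by (simp add: vec_eq_iff bq_nth)
lemma bq_mult_zero_right: "bq_mult a b c d x 0 = 0"
  by (simp add: vec_eq_iff bq_nth)

lemma bq_mult_one_left: "bq_mult a b c d bq_one x = x"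
proof (rule vec_eq_iff[THEN iffD2], rule allI)
  fix r :: "qb\<times>qb"
  obtain p q where r: "r = (p,q)" by fastforce
  show "bq_mult a b c d bq_one x $ r = x $ r"
    unfolding r by (cases p; cases q; simp add: bq_nth bq_one_def sum_UNIV_pair sum_UNIV_qb K_def qsc_def)
qed
lemma bq_mult_one_right: "bq_mult a b c d x bq_one = x"
proof (rule vec_eq_iff[THEN iffD2], rule allI)
  fix r :: "qb\<times>qb"
  obtain p q where r: "r = (p,q)" by fastforce
  show "bq_mult a b c d x bq_one $ r = x $ r"
    unfolding r by (cases p; cases q; simp add: bq_nth bq_one_def sum_UNIV_pair sum_UNIV_qb K_def qsc_def)
qed

definition kap :: "'a::field \<Rightarrow> 'a \<Rightarrow> 'a \<Rightarrow> 'a \<Rightarrow> qb\<times>qb \<Rightarrow> 'a" where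
  "kap a b c d p = qkap a b (fst p) * qkap c d (snd p)"

lemma K_trace: "K a b c d s t (Q0,Q0) = (if s = t then kap a b c d s else 0)"
  by (auto simp add: K_def kap_def qa_trace prod_eq_iff)

lemma bq_trd_mult: "bq_trd (bq_mult a b c d x y) = 4 * (\<Sum>s\<in>UNIV. x$s * y$s * kap a b c d s)"
proof -
  have inner: "(\<Sum>t\<in>UNIV. x$s * y$t * K a b c d s t (Q0,Q0)) = x$s * y$s * kap a b c d s" for s
  proof -
    have "(\<Sum>t\<in>UNIV. x$s * y$t * K a b c d s t (Q0,Q0)) = (\<Sum>t\<in>UNIV. if t = s then x$s * y$s * kap a b c d s else 0)"
      by (rule sum.cong) (auto simp: K_trace)
    then show ?thesis by simp
  qed
  show ?thesis by (simp only: bq_trd_def bq_nth inner)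
qed

lemma bq_trd_comm: "bq_trd (bq_mult a b c d x y) = bq_trd (bq_mult a b c d y x)"
  by (simp add: bq_trd_mult mult_ac)

lemma bq_trd_inv: "bq_trd (bq_inv x) = bq_trd x"
  by (simp add: bq_trd_def bq_inv_def qeps_def)
lemma bq_trd_add: "bq_trd (x + y) = bq_trd x + bq_trd y"
  by (simp add: bq_trd_def algebra_simps)
lemma bq_trd_scale: "bq_trd (k *s x) = k * bq_trd x"
  by (simp add: bq_trd_def algebra_simps)
lemma bq_trd_neg: "bq_trd (- x) = - bq_trd x"
  by (simp add: bq_trd_def)
lemma bq_trd_zero: "bq_trd 0 = 0"
  by (simp add: bq_trd_def)



definition inA1 :: "'a::field biquat \<Rightarrow> bool" where "inA1 x \<longleftrightarrow> (\<forall>p. snd p \<noteq> Q0 \<longrightarrow> x$p = 0)"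
definition inA2 :: "'a::field biquat \<Rightarrow> bool" where "inA2 x \<longleftrightarrow> (\<forall>p. fst p \<noteq> Q0 \<longrightarrow> x$p = 0)"
definition suppU :: "'a::field biquat \<Rightarrow> bool" where "suppU x \<longleftrightarrow> (\<forall>p. (fst p = Q0 \<or> snd p = Q0) \<longrightarrow> x$p = 0)"

lemma inA1D: "inA1 x \<Longrightarrow> snd p \<noteq> Q0 \<Longrightarrow> x$p = 0" unfolding inA1_def by blast
lemma inA2D: "inA2 x \<Longrightarrow> fst p \<noteq> Q0 \<Longrightarrow> x$p = 0" unfolding inA2_def by blast
lemma suppUD: "suppU x \<Longrightarrow> fst p = Q0 \<or> snd p = Q0 \<Longrightarrow> x$p = 0" unfolding suppU_def by blast

lemma inA1_mult: assumes "inA1 x" "inA1 y" shows "inA1 (bq_mult a b c d x y)"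
  unfolding inA1_def
proof (intro allI impI)
  fix r :: "qb\<times>qb" assume r: "snd r \<noteq> Q0"
  have zero: "x$s * y$t * K a b c d s t r = 0" for s t
  proof (cases "snd s = Q0 \<and> snd t = Q0")
    case True then show ?thesis using r by (simp add: K_def qa_one_left)
  next
    case False then have "x$s = 0 \<or> y$t = 0" using assms inA1D by blast
    then show ?thesis by auto
  qed
  show "bq_mult a b c d x y $ r = 0" by (simp only: bq_nth zero sum.neutral_const)
qed

lemma inA2_mult: assumes "inA2 x" "inA2 y" shows "inA2 (bq_mult a b c d x y)"
  unfolding inA2_def
proof (intro allI impI)
  fix r :: "qb\<times>qb" assume r: "fst r \<noteq> Q0"
  have zero: "x$s * y$t * K a b c d s t r = 0" for s t
  proof (cases "fst s = Q0 \<and> fst t = Q0")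
    case True then show ?thesis using r by (simp add: K_def qa_one_left)
  next
    case False then have "x$s = 0 \<or> y$t = 0" using assms inA2D by blast
    then show ?thesis by auto
  qed
  show "bq_mult a b c d x y $ r = 0" by (simp only: bq_nth zero sum.neutral_const)
qed

lemma inA1_inv: "inA1 x \<Longrightarrow> inA1 (bq_inv x)"
  by (simp add: inA1_def bq_inv_nth)
lemma inA2_inv: "inA2 x \<Longrightarrow> inA2 (bq_inv x)"
  by (simp add: inA2_def bq_inv_nth)

lemma A12_nth: assumes "inA1 x" "inA2 y"
  shows "bq_mult a b c d x y $ r = x$(fst r, Q0) * y$(Q0, snd r)"
    and "bq_mult a b c d y x $ r = x$(fst r, Q0) * y$(Q0, snd r)"
proof -
  have F1: "x$s * y$t * K a b c d s t r = (if s = (fst r, Q0) then (if t = (Q0, snd r) then x$(fst r, Q0) * y$(Q0, snd r) else 0) else 0)" for s t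
  proof (cases "snd s = Q0 \<and> fst t = Q0")
    case True then show ?thesis by (cases s; cases t; cases r; auto simp: K_def qa_one_left qa_one_right)
  next
    case False then have "x$s = 0 \<or> y$t = 0" using assms inA1D inA2D by blast
    moreover have "\<not> (s = (fst r, Q0) \<and> t = (Q0, snd r))" using False by auto
    ultimately show ?thesis by auto
  qed
  have G: "(\<Sum>t\<in>UNIV. (if s = (fst r, Q0) then (if t = (Q0, snd r) then x$(fst r, Q0) * y$(Q0, snd r) else 0) else 0))
     = (if s = (fst r, Q0) then x$(fst r, Q0) * y$(Q0, snd r) else 0)" for s
    by (cases "s = (fst r, Q0)") simp_all
  show "bq_mult a b c d x y $ r = x$(fst r, Q0) * y$(Q0, snd r)" by (simp only: bq_nth F1 G) simp
  have F2: "y$t * x$s * K a b c d t s r = (if s = (fst r, Q0) then (if t = (Q0, snd r) then x$(fst r, Q0) * y$(Q0, snd r) else 0) else 0)" for s t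
  proof (cases "snd s = Q0 \<and> fst t = Q0")
    case True then show ?thesis by (cases s; cases t; cases r; auto simp: K_def qa_one_left qa_one_right)
  next
    case False then have "x$s = 0 \<or> y$t = 0" using assms inA1D inA2D by blast
    moreover have "\<not> (s = (fst r, Q0) \<and> t = (Q0, snd r))" using False by auto
    ultimately show ?thesis by auto
  qed
  have "bq_mult a b c d y x $ r = (\<Sum>s\<in>UNIV. \<Sum>t\<in>UNIV. y$t * x$s * K a b c d t s r)"
    by (simp only: bq_nth) (rule sum.swap)
  then show "bq_mult a b c d y x $ r = x$(fst r, Q0) * y$(Q0, snd r)"
    by (simp only: F2 G) simp
qed

lemma A12_comm: "inA1 x \<Longrightarrow> inA2 y \<Longrightarrow> bq_mult a b c d x y = bq_mult a b c d y x"
  by (simp add: vec_eq_iff A12_nth)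

lemma trd_A1_U: assumes "inA1 z" "suppU u" shows "bq_trd (bq_mult a b c d z u) = 0"
proof -
  have zero: "z$s * u$s * kap a b c d s = 0" for s
  proof -
    have "z$s = 0 \<or> u$s = 0" using assms inA1D suppUD by blast
    then show ?thesis by auto
  qed
  show ?thesis by (simp only: bq_trd_mult zero sum.neutral_const mult_zero_right)
qed
lemma trd_A2_U: assumes "inA2 z" "suppU u" shows "bq_trd (bq_mult a b c d z u) = 0"
proof -
  have zero: "z$s * u$s * kap a b c d s = 0" for s
  proof -
    have "z$s = 0 \<or> u$s = 0" using assms inA2D suppUD by blast
    then show ?thesis by auto
  qed
  show ?thesis by (simp only: bq_trd_mult zero sum.neutral_const mult_zero_right)
qed



definition bqB :: "'a::field \<Rightarrow> 'a \<Rightarrow> 'a \<Rightarrow> 'a \<Rightarrow> 'a biquat \<Rightarrow> 'a biquat \<Rightarrow> 'a biquat \<Rightarrow> 'a" where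
  "bqB a b c d u x y = bq_trd (bq_mult a b c d (bq_mult a b c d x u) (bq_inv y))"

lemma bqB_sym: assumes "bq_inv u = u" shows "bqB a b c d u x y = bqB a b c d u y x"
proof -
  have "bqB a b c d u x y = bq_trd (bq_inv (bq_mult a b c d (bq_mult a b c d x u) (bq_inv y)))"
    by (simp add: bqB_def bq_trd_inv)
  also have "\<dots> = bqB a b c d u y x"
    by (simp add: bqB_def bq_inv_mult assms bq_assoc)
  finally show ?thesis .
qed

lemma trd_cyc3: "bq_trd (bq_mult a b c d x (bq_mult a b c d y z)) = bq_trd (bq_mult a b c d (bq_mult a b c d z x) y)"
  by (metis bq_assoc bq_trd_comm)

lemma bqB_A1A1: assumes "inA1 l1" "inA1 l2" "suppU u" shows "bqB a b c d u l1 l2 = 0"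
proof -
  have "bqB a b c d u l1 l2 = bq_trd (bq_mult a b c d (bq_mult a b c d (bq_inv l2) l1) u)"
    unfolding bqB_def by (metis bq_assoc bq_trd_comm)
  also have "\<dots> = 0" by (rule trd_A1_U[OF inA1_mult[OF inA1_inv[OF assms(2)] assms(1)] assms(3)])
  finally show ?thesis .
qed

lemma bqB_A2A2: assumes "inA2 m" "inA2 n" "suppU u"
  and H1: "bq_mult a b c d (bq_inv al) u = - bq_mult a b c d u al"
  and H2: "bq_mult a b c d al al = e *s bq_one"
  shows "bqB a b c d u (bq_mult a b c d m (bq_inv al)) (bq_mult a b c d n (bq_inv al)) = 0"
proof -
  let ?M = "bq_mult a b c d"
  have H1': "?M (bq_inv al) (?M u X) = - ?M u (?M al X)" for X
    by (metis H1 bq_assoc bq_mult_neg_left)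
  have H2': "?M al (?M al X) = e *s X" for X
    by (metis H2 bq_assoc bq_mult_scale_left bq_mult_one_left)
  have "bqB a b c d u (?M m (bq_inv al)) (?M n (bq_inv al)) = - (e * bq_trd (?M m (?M u (bq_inv n))))"
    by (simp add: bqB_def bq_inv_mult bq_assoc H1' H2' bq_mult_neg_left bq_mult_neg_right
        bq_mult_scale_left bq_mult_scale_right bq_trd_neg bq_trd_scale)
  also have "bq_trd (?M m (?M u (bq_inv n))) = bq_trd (?M (?M (bq_inv n) m) u)"
    by (rule trd_cyc3)
  also have "\<dots> = 0" by (rule trd_A2_U[OF inA2_mult[OF inA2_inv[OF assms(2)] assms(1)] assms(3)])
  finally show ?thesis by simp
qed

definition skewS :: "'a::field biquat \<Rightarrow> bool" where
  "skewS x \<longleftrightarrow> (\<forall>p. (fst p = Q0 \<longleftrightarrow> snd p = Q0) \<longrightarrow> x$p = 0)"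
lemma skewSD: "skewS x \<Longrightarrow> (fst p = Q0 \<longleftrightarrow> snd p = Q0) \<Longrightarrow> x$p = 0" unfolding skewS_def by blast

lemma conc1:
  assumes "inA1 lam" "lam$(Q0,Q0) = 0" "skewS l" "inA2 nu"
  shows "bq_trd (bq_mult a b c d (bq_mult a b c d lam l) nu) =
    4 * nu$(Q0,Q0) * (a * lam$(QI,Q0) * l$(QI,Q0) + b * lam$(QJ,Q0) * l$(QJ,Q0) - a * b * lam$(QK,Q0) * l$(QK,Q0))"
  using assms(2)
  by (simp add: bq_trd_mult bq_nth sum_UNIV_pair sum_UNIV_qb K_def qsc_def kap_def
      inA1D[OF assms(1)] inA2D[OF assms(4)] skewSD[OF assms(3)] algebra_simps)

lemma conc_cross:
  assumes "inA1 x" "x$(Q0,Q0) = 0" "inA1 y" "y$(Q0,Q0) = 0"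
  shows "bq_mult a b c d x y $ (QK,Q0) = x$(QI,Q0) * y$(QJ,Q0) - x$(QJ,Q0) * y$(QI,Q0)"
    and "bq_mult a b c d x y $ (QJ,Q0) = a * (x$(QI,Q0) * y$(QK,Q0) - x$(QK,Q0) * y$(QI,Q0))"
    and "bq_mult a b c d x y $ (QI,Q0) = b * (x$(QK,Q0) * y$(QJ,Q0) - x$(QJ,Q0) * y$(QK,Q0))"
  using assms(2,4)
  by (simp_all add: bq_nth sum_UNIV_pair sum_UNIV_qb K_def qsc_def
      inA1D[OF assms(1)] inA1D[OF assms(3)] algebra_simps)



lemma bqB_A1beta:
  assumes "inA1 lam" "lam$(Q0,Q0) = 0" "skewS (bq_mult a b c d u al)" "inA2 m"
    and orth: "a * lam$(QI,Q0) * (bq_mult a b c d u al)$(QI,Q0) + b * lam$(QJ,Q0) * (bq_mult a b c d u al)$(QJ,Q0)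
               - a * b * lam$(QK,Q0) * (bq_mult a b c d u al)$(QK,Q0) = 0"
  shows "bqB a b c d u lam (bq_mult a b c d m (bq_inv al)) = 0"
proof -
  let ?M = "bq_mult a b c d"
  have "bqB a b c d u lam (?M m (bq_inv al)) = bq_trd (?M (?M lam (?M u al)) (bq_inv m))"
    by (simp add: bqB_def bq_inv_mult bq_assoc)
  also have "\<dots> = 0"
    using conc1[OF assms(1,2,3) inA2_inv[OF assms(4)]] orth by simp
  finally show ?thesis .
qed

lemma inA2_scale: "inA2 x \<Longrightarrow> inA2 (k *s x)"
  by (simp add: inA2_def)

lemma prod_A2:
  assumes m1: "inA2 m1" and m2: "inA2 m2" and l1: "inA1 l1"
    and e1: "l1 = bq_mult a b c d m1 be" and e2: "l2 = bq_mult a b c d m2 be"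
    and bb: "bq_mult a b c d be be = e *s bq_one" and e: "e \<noteq> 0"
  shows "inA2 (bq_mult a b c d l1 l2)"
proof -
  let ?M = "bq_mult a b c d"
  have bb': "?M be (?M be X) = e *s X" for X
    by (metis bb bq_assoc bq_mult_scale_left bq_mult_one_left)
  have "?M (?M l1 l2) be = ?M l1 (?M l2 be)" by (simp add: bq_assoc)
  also have "\<dots> = e *s ?M l1 m2" by (simp add: e2 bq_assoc bb bq_mult_scale_right bq_mult_one_right)
  also have "?M l1 m2 = ?M m2 l1" by (rule A12_comm[OF l1 m2])
  also have "e *s ?M m2 l1 = ?M (e *s ?M m2 m1) be" by (simp add: e1 bq_assoc bq_mult_scale_left)
  finally have X: "?M (?M l1 l2) be = ?M (e *s ?M m2 m1) be" .
  have "e *s ?M l1 l2 = ?M (?M (?M l1 l2) be) be" by (simp add: bq_assoc bb bq_mult_scale_right bq_mult_one_right)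
  also have "\<dots> = ?M (?M (e *s ?M m2 m1) be) be" by (simp only: X)
  also have "\<dots> = e *s (e *s ?M m2 m1)" by (simp only: bq_assoc bb bq_mult_scale_right bq_mult_one_right)
  finally have F: "e *s ?M l1 l2 = e *s (e *s ?M m2 m1)" .
  have "?M l1 l2 = e *s ?M m2 m1" using F e vec.scale_cancel_left by blast
  then show ?thesis by (simp add: inA2_scale inA2_mult m1 m2)
qed

lemma bqB_add_left: "bqB a b c d u (x + y) z = bqB a b c d u x z + bqB a b c d u y z"
  by (simp add: bqB_def bq_mult_add_left bq_trd_add)
lemma bqB_add_right: "bqB a b c d u z (x + y) = bqB a b c d u z x + bqB a b c d u z y"
  by (simp add: bqB_def bq_mult_add_right bq_inv_add bq_trd_add)
lemma bqB_scale_left: "bqB a b c d u (k *s x) z = k * bqB a b c d u x z"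
  by (simp add: bqB_def bq_mult_scale_left bq_trd_scale)
lemma bqB_scale_right: "bqB a b c d u z (k *s x) = k * bqB a b c d u z x"
  by (simp add: bqB_def bq_mult_scale_right bq_inv_scale bq_trd_scale)
lemma bqB_zero_left: "bqB a b c d u 0 z = 0"
  by (simp add: bqB_def bq_mult_zero_left bq_trd_zero)
lemma bqB_zero_right: "bqB a b c d u z 0 = 0"
  by (simp add: bqB_def bq_inv_zero bq_mult_zero_right bq_trd_zero)

lemma bqB_span:
  assumes "\<forall>x\<in>S. \<forall>y\<in>S. bqB a b c d u x y = 0"
  shows "\<forall>x\<in>vec.span S. \<forall>y\<in>vec.span S. bqB a b c d u x y = 0"
proof -
  have step1: "\<forall>y\<in>vec.span S. bqB a b c d u x y = 0" if x: "x \<in> S" for x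
  proof -
    have "vec.subspace {y. bqB a b c d u x y = 0}"
      by (simp add: vec.subspace_def bqB_add_right bqB_scale_right bqB_zero_right)
    moreover have "S \<subseteq> {y. bqB a b c d u x y = 0}" using assms x by auto
    ultimately have "vec.span S \<subseteq> {y. bqB a b c d u x y = 0}" by (rule vec.span_minimal[rotated])
    then show ?thesis by auto
  qed
  show ?thesis
  proof (intro ballI)
    fix x y assume x: "x \<in> vec.span S" and y: "y \<in> vec.span S"
    have "vec.subspace {x. bqB a b c d u x y = 0}"
      by (simp add: vec.subspace_def bqB_add_left bqB_scale_left bqB_zero_left)
    moreover have "S \<subseteq> {x. bqB a b c d u x y = 0}" using step1 y by auto
    ultimately have "vec.span S \<subseteq> {x. bqB a b c d u x y = 0}" by (rule vec.span_minimal[rotated])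
    then show "bqB a b c d u x y = 0" using x by auto
  qed
qed

definition mkA1 :: "'a::field \<Rightarrow> 'a \<Rightarrow> 'a \<Rightarrow> 'a biquat" where
  "mkA1 p q r = (\<chi> x. if x = (QI,Q0) then p else if x = (QJ,Q0) then q else if x = (QK,Q0) then r else 0)"

lemma mkA1_simps: "mkA1 p q r $ (QI,Q0) = p" "mkA1 p q r $ (QJ,Q0) = q" "mkA1 p q r $ (QK,Q0) = r"
  "mkA1 p q r $ (Q0,Q0) = 0"
  by (simp_all add: mkA1_def)
lemma mkA1_inA1: "inA1 (mkA1 p q r)"
  by (auto simp: inA1_def mkA1_def)



lemma exists_lam:
  assumes a: "a \<noteq> 0" and b: "b \<noteq> 0"
    and bb: "bq_mult a b c d be be = e *s bq_one" and e: "e \<noteq> 0"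
  shows "\<exists>lam. inA1 lam \<and> lam$(Q0,Q0) = 0 \<and>
     a * lam$(QI,Q0) * yI + b * lam$(QJ,Q0) * yJ - a * b * lam$(QK,Q0) * yK = 0 \<and>
     \<not> (\<exists>m. inA2 m \<and> lam = bq_mult a b c d m be)"
proof (rule ccontr)
  let ?M = "bq_mult a b c d"
  let ?inS = "\<lambda>x. \<exists>m. inA2 m \<and> x = ?M m be"
  assume "\<not> ?thesis"
  then have H: "\<And>lam. inA1 lam \<Longrightarrow> lam$(Q0,Q0) = 0 \<Longrightarrow>
     a * lam$(QI,Q0) * yI + b * lam$(QJ,Q0) * yJ - a * b * lam$(QK,Q0) * yK = 0 \<Longrightarrow> ?inS lam"
    by blast
  have H': "?inS (mkA1 p q r)" if "p * (a*yI) + q * (b*yJ) + r * (-(a*b*yK)) = 0" for p q r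
    using H[OF mkA1_inA1] that by (simp add: mkA1_simps algebra_simps)
  have pair: "p*q' - q*p' = 0 \<and> a*(p*r' - r*p') = 0 \<and> b*(r*q' - q*r') = 0"
    if "?inS (mkA1 p q r)" "?inS (mkA1 p' q' r')" for p q r p' q' r'
  proof -
    from that obtain m1 m2 where m1: "inA2 m1" "mkA1 p q r = ?M m1 be"
      and m2: "inA2 m2" "mkA1 p' q' r' = ?M m2 be" by blast
    have "inA2 (?M (mkA1 p q r) (mkA1 p' q' r'))"
      by (rule prod_A2[OF m1(1) m2(1) mkA1_inA1 m1(2) m2(2) bb e])
    then have "?M (mkA1 p q r) (mkA1 p' q' r') $ (QK,Q0) = 0"
      "?M (mkA1 p q r) (mkA1 p' q' r') $ (QJ,Q0) = 0"
      "?M (mkA1 p q r) (mkA1 p' q' r') $ (QI,Q0) = 0"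
      by (auto intro: inA2D)
    then show ?thesis
      using conc_cross[OF mkA1_inA1 mkA1_simps(4) mkA1_inA1 mkA1_simps(4), of a b c d p q r p' q' r']
      by (simp add: mkA1_simps)
  qed
  define wI where "wI = a*yI"
  define wJ where "wJ = b*yJ"
  define wK where "wK = -(a*b*yK)"
  have c1: "?inS (mkA1 0 wK (-wJ))" by (rule H') (simp add: wI_def wJ_def wK_def algebra_simps)
  have c2: "?inS (mkA1 (-wK) 0 wI)" by (rule H') (simp add: wI_def wJ_def wK_def algebra_simps)
  have c3: "?inS (mkA1 wJ (-wI) 0)" by (rule H') (simp add: wI_def wJ_def wK_def algebra_simps)
  show False
  proof (cases "wK = 0")
    case False
    then show False using pair[OF c1 c2] by simp
  next
    case K: True
    show False
    proof (cases "wJ = 0")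
      case False
      then show False using pair[OF c1 c3] K a by simp
    next
      case J: True
      show False
      proof (cases "wI = 0")
        case False
        then show False using pair[OF c2 c3] K J b by simp
      next
        case I: True
        have e1: "?inS (mkA1 1 0 0)" by (rule H') (simp add: I[unfolded wI_def] algebra_simps)
        have e2: "?inS (mkA1 0 1 0)" by (rule H') (simp add: J[unfolded wJ_def] algebra_simps)
        show False using pair[OF e1 e2] by simp
      qed
    qed
  qed
qed



lemma EIEI: "bq_mult e f g h (axis (QI,Q0) 1) (axis (QI,Q0) 1) = e *s (bq_one :: 'a::field biquat)"
proof (rule vec_eq_iff[THEN iffD2], rule allI)
  fix r :: "qb\<times>qb"
  obtain p q where r: "r = (p,q)" by fastforce
  show "bq_mult e f g h (axis (QI,Q0) 1) (axis (QI,Q0) 1) $ r = (e *s (bq_one :: 'a biquat)) $ r"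
    unfolding r by (cases p; cases q; simp add: bq_nth bq_one_def axis_def sum_UNIV_pair sum_UNIV_qb K_def qsc_def)
qed

lemma EIinv: "bq_inv (axis (QI,Q0) 1) = - (axis (QI,Q0) (1::'a::field))"
  by (auto simp: vec_eq_iff bq_inv_nth epsP_def qeps_def axis_def)

lemma bq_inv_one: "bq_inv bq_one = (bq_one :: 'a::field biquat)"
  by (auto simp: vec_eq_iff bq_inv_nth epsP_def qeps_def bq_one_def)

theorem lemma4p3:
  fixes a b c d e f g h :: "'a::field"
    and u :: "'a biquat"
  assumes char: "(2::'a) \<noteq> 0"
    and nz: "a \<noteq> 0" "b \<noteq> 0" "c \<noteq> 0" "d \<noteq> 0" "e \<noteq> 0" "f \<noteq> 0" "g \<noteq> 0" "h \<noteq> 0"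
    and u_inv: "bq_invertible a b c d u"
    and u_sym: "bq_inv u = u"
    and u_trd: "bq_trd u = 0"
    and iso: "\<exists>phi. bq_iso_inv e f g h a b c d
                 (\<lambda>x. bq_mult a b c d (bq_mult a b c d (bq_inverse a b c d u) (bq_inv x)) u) phi"
  shows "\<exists>W. vec.subspace W \<and> vec.dim W = 5 \<and> (\<forall>w\<in>W. bq_qform a b c d u w = 0)"
proof -
  let ?M = "bq_mult a b c d"
  from iso obtain phi where phi: "bq_iso_inv e f g h a b c d
                 (\<lambda>x. ?M (?M (bq_inverse a b c d u) (bq_inv x)) u) phi" by blast
  then have lin: "Vector_Spaces.linear (*s) (*s) phi" and one: "phi bq_one = bq_one"
    and mult: "\<And>x y. phi (bq_mult e f g h x y) = ?M (phi x) (phi y)"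
    and inv: "\<And>x. phi (bq_inv x) = ?M (?M (bq_inverse a b c d u) (bq_inv (phi x))) u"
    unfolding bq_iso_inv_def by auto
  have linS: "\<And>k x. phi (k *s x) = k *s phi x"
    using lin unfolding Vector_Spaces.linear_iff by blast
  from u_inv obtain w where uw: "?M u w = bq_one" and wu: "?M w u = bq_one"
    unfolding bq_invertible_def by blast
  have vw: "bq_inverse a b c d u = w" unfolding bq_inverse_def
  proof (rule the_equality)
    show "?M u w = bq_one \<and> ?M w u = bq_one" using uw wu by simp
    fix w' assume "?M u w' = bq_one \<and> ?M w' u = bq_one"
    then show "w' = w" by (metis bq_assoc bq_mult_one_left bq_mult_one_right uw)
  qed
  define al where "al = phi (axis (QI,Q0) 1)"
  have H2: "?M al al = e *s bq_one"
    unfolding al_def mult[symmetric] EIEI linS one ..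
  have "phi (bq_inv (axis (QI,Q0) 1)) = - al"
    unfolding EIinv al_def using linS[of "-1"] by simp
  then have X: "?M (?M w (bq_inv al)) u = - al" using inv vw al_def by simp
  have H1: "?M (bq_inv al) u = - ?M u al"
  proof -
    have "?M (bq_inv al) u = ?M u (?M (?M w (bq_inv al)) u)"
      by (metis bq_assoc bq_mult_one_left uw)
    also have "\<dots> = - ?M u al" by (simp add: X bq_mult_neg_right)
    finally show ?thesis .
  qed
  have two: "(2::'a) * x = 0 \<Longrightarrow> x = 0" for x using char by simp
  have suppU: "suppU u" unfolding suppU_def
  proof (intro allI impI)
    fix p :: "qb\<times>qb" assume p: "fst p = Q0 \<or> snd p = Q0"
    show "u$p = 0"
    proof (cases "fst p = Q0 \<and> snd p = Q0")
      case True
      then have "p = (Q0,Q0)" by (cases p) auto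
      moreover have "4 * u$(Q0,Q0) = 0" using u_trd by (simp add: bq_trd_def)
      ultimately show ?thesis using char by (metis mult_eq_0_iff mult_2 numeral_Bit0 one_add_one)
    next
      case False
      then have "epsP p = (-1::'a)" using p by (cases p) (auto simp: epsP_def qeps_def)
      moreover have "bq_inv u $ p = u $ p" using u_sym by simp
      ultimately have "- u$p = u$p" by (simp add: bq_inv_nth)
      then show ?thesis using two by (metis add_eq_0_iff mult_2 neg_equal_iff_equal)
    qed
  qed
  define l where "l = ?M u al"
  have lskew: "bq_inv l = - l"
    unfolding l_def by (simp add: bq_inv_mult u_sym H1)
  have skew: "skewS l" unfolding skewS_def
  proof (intro allI impI)
    fix p :: "qb\<times>qb" assume p: "fst p = Q0 \<longleftrightarrow> snd p = Q0"
    then have "epsP p = (1::'a)" by (cases p) (auto simp: epsP_def qeps_def)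
    moreover have "bq_inv l $ p = - l $ p" using lskew by simp
    ultimately have "l$p = - l$p" by (simp add: bq_inv_nth)
    then show "l$p = 0" using two by (metis add_eq_0_iff mult_2 neg_equal_iff_equal)
  qed
  define be where "be = bq_inv al"
  have bb: "?M be be = e *s bq_one"
    unfolding be_def bq_inv_mult[symmetric] H2 bq_inv_scale bq_inv_one ..
  obtain lam where lam1: "inA1 lam" and lam0: "lam$(Q0,Q0) = 0"
    and orth: "a * lam$(QI,Q0) * l$(QI,Q0) + b * lam$(QJ,Q0) * l$(QJ,Q0) - a * b * lam$(QK,Q0) * l$(QK,Q0) = 0"
    and notS: "\<not> (\<exists>m. inA2 m \<and> lam = ?M m be)"
    using exists_lam[OF nz(1) nz(2) bb nz(5)] by blast
  define E where "E = {axis (Q0,Q0) 1, axis (Q0,QI) 1, axis (Q0,QJ) 1, axis (Q0,QK) (1::'a)}"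
  have EA2: "inA2 m" if "m \<in> E" for m
    using that by (auto simp: E_def inA2_def axis_def)
  define S4 where "S4 = (\<lambda>m. ?M m be) ` E"
  define S where "S = insert lam S4"
  have Rlin: "Vector_Spaces.linear (*s) (*s) (\<lambda>m. ?M m be)"
    by (simp add: Vector_Spaces.linear_iff vec.vector_space_axioms bq_mult_add_left bq_mult_scale_left)
  have Rinj: "inj_on (\<lambda>m. ?M m be) X" for X
  proof (rule inj_onI)
    fix x y assume "?M x be = ?M y be"
    then have "?M (?M x be) be = ?M (?M y be) be" by simp
    then have "e *s x = e *s y" by (simp add: bq_assoc bb bq_mult_scale_right bq_mult_one_right)
    then show "x = y" using nz(5) vec.scale_cancel_left by blast
  qed
  have Eind: "vec.independent E"
    by (rule vec.independent_mono[OF independent_cart_basis]) (auto simp: E_def cart_basis_def)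
  have S4ind: "vec.independent S4"
    unfolding S4_def by (rule vec.linear_independent_injective_image[OF Rlin Eind Rinj])
  have spanE: "vec.span E \<subseteq> {m. inA2 m}"
  proof (rule vec.span_minimal)
    show "E \<subseteq> {m. inA2 m}" using EA2 by auto
    show "vec.subspace {m. inA2 m}" by (auto simp: vec.subspace_def inA2_def)
  qed
  have spanS4: "vec.span S4 = (\<lambda>m. ?M m be) ` vec.span E"
    unfolding S4_def by (rule vec.linear_span_image[OF Rlin])
  have lam_notin: "lam \<notin> vec.span S4"
    using notS spanE unfolding spanS4 by auto
  have Sind: "vec.independent S"
    unfolding S_def by (rule vec.independent_insertI[OF lam_notin S4ind])
  have cardE: "card E = 4" by (simp add: E_def axis_eq_axis)
  have cardS4: "card S4 = 4" unfolding S4_def using card_image[OF Rinj] cardE by simp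
  have finS4: "finite S4" by (simp add: S4_def E_def)
  have "lam \<notin> S4" using lam_notin vec.span_superset by blast
  then have cardS: "card S = 5" unfolding S_def using cardS4 finS4 by simp
  have pairs: "\<forall>x\<in>S. \<forall>y\<in>S. bqB a b c d u x y = 0"
  proof -
    have ll: "bqB a b c d u lam lam = 0" by (rule bqB_A1A1[OF lam1 lam1 suppU])
    have lm: "bqB a b c d u lam (?M m be) = 0" if "m \<in> E" for m
      unfolding be_def
      by (rule bqB_A1beta[OF lam1 lam0 skew[unfolded l_def] EA2[OF that] orth[unfolded l_def]])
    have ml: "bqB a b c d u (?M m be) lam = 0" if "m \<in> E" for m
      using lm[OF that] bqB_sym[OF u_sym] by metis
    have mm: "bqB a b c d u (?M m be) (?M m' be) = 0" if "m \<in> E" "m' \<in> E" for m m'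
      unfolding be_def by (rule bqB_A2A2[OF EA2[OF that(1)] EA2[OF that(2)] suppU H1 H2])
    show ?thesis unfolding S_def S4_def using ll lm ml mm by auto
  qed
  show ?thesis
  proof (intro exI conjI)
    show "vec.subspace (vec.span S)" by simp
    show "vec.dim (vec.span S) = 5" using vec.dim_span_eq_card_independent[OF Sind] cardS by simp
    show "\<forall>w\<in>vec.span S. bq_qform a b c d u w = 0"
      using bqB_span[OF pairs] by (simp add: bq_qform_def bqB_def)
  qed
qed

end
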